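(* Let $\mu$ be a $(C,\gamma)$-absolutely decaying measure on $\mathbb{R}$, let $K=\operatorname{supp}\mu$, let $0<\alpha\le\frac14\left(\frac{1}{3C}\right)^{1/\gamma}$, let $S\subset\mathbb{R}$ be $\alpha$-winning on $K$, and let $S'\subset S$ be countable. Then $S\setminus S'$ is $\alpha$-winning on $K$.
   Context: $B(x,\rho)$ denotes the closed ball. A locally finite Borel measure $\mu$ on $\mathbb{R}$ is $(C,\gamma)$-absolutely decaying if there is $\rho_0>0$ such that for all $0<\rho\le\rho_0$, $x\in\operatorname{supp}\mu$, $y\in\mathbb{R}$, $\varepsilon>0$: $\mu(B(x,\rho)\cap B(y,\varepsilon\rho))<C\varepsilon^\gamma\mu(B(x,\rho))$. Schmidt's game on a complete metric space $(X,d)$ with parameters $0<\alpha,\beta<1$ and target $S\subset X$: on $X\times\mathbb{R}_+$ write $(x_2,\rho_2)\le_s(x_1,\rho_1)$ if $\rho_2+d(x_1,x_2)\le\rho_1$. Bob picks $\omega_1=(x_1,\rho_1)$; then Alice and Bob alternately pick $\omega_k'=(x_k',\rho_k')\le_s\omega_k$ with $\rho_k'=\alpha\rho_k$ and $\omega_{k+1}\le_s\omega_k'$ with $\rho_{k+1}=\beta\rho_k'$. The nested closed balls intersect in a point $x_\infty$; Alice wins if $x_\infty\in S$. $S$ is $\alpha$-winning if for every $\beta\in(0,1)$ Alice has a strategy winning against all plays of Bob. For closed $K\subset\mathbb{R}$, $S\subset\mathbb{R}$ is $\alpha$-winning on $K$ if $S\cap K$ is $\alpha$-winning for the game played on $K$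 with the induced metric. *)

theory Defs
  imports "HOL-Analysis.Analysis"
begin

definition locally_finite_borel :: "real measure \<Rightarrow> bool" where
  "locally_finite_borel \<mu> \<longleftrightarrow> sets \<mu> = sets borel \<and>
     (\<forall>x. \<exists>r>0. emeasure \<mu> (ball x r) < \<infinity>)"

definition msupp :: "real measure \<Rightarrow> real set" where
  "msupp \<mu> = {x. \<forall>r>0. emeasure \<mu> (ball x r) > 0}"

definition abs_decaying :: "real measure \<Rightarrow> real \<Rightarrow> real \<Rightarrow> bool" where
  "abs_decaying \<mu> C \<gamma> \<longleftrightarrow> locally_finite_borel \<mu> \<and> C > 0 \<and> \<gamma> > 0 \<and>
     (\<exists>\<rho>0>0. \<forall>\<rho> x y \<epsilon>. 0 < \<rho> \<and> \<rho> \<le> \<rho>0 \<and> x \<in> msupp \<mu> \<and> \<epsilon> > 0 \<longrightarrow>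
        emeasure \<mu> (cball x \<rho> \<inter> cball y (\<epsilon> * \<rho>))
          < ennreal (C * \<epsilon> powr \<gamma>) * emeasure \<mu> (cball x \<rho>))"

text \<open>Schmidt's order on (centre, radius) pairs: w2 \<le>s w1.\<close>
definition le_s :: "real \<times> real \<Rightarrow> real \<times> real \<Rightarrow> bool" where
  "le_s w2 w1 \<longleftrightarrow> snd w2 + dist (fst w1) (fst w2) \<le> snd w1"

text \<open>Schmidt's game on the closed set K (induced metric), target S.
  Alice's strategy f maps the list of Bob's moves so far [w_1,...,w_k] to her move w_k'.
  Bob's moves are b 0, b 1, ... (b k is omega_(k+1)).\<close>
definition alice_move_ok :: "real set \<Rightarrow> real \<Rightarrow> real \<times> real \<Rightarrow> real \<times> real \<Rightarrow> bool" where
  "alice_move_ok K \<alpha> a w \<longleftrightarrow> fst a \<in> K \<and> snd a = \<alpha> * snd w \<and> le_s a w"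

definition bob_move_ok :: "real set \<Rightarrow> real \<Rightarrow> real \<times> real \<Rightarrow> real \<times> real \<Rightarrow> bool" where
  "bob_move_ok K \<beta> w a \<longleftrightarrow> fst w \<in> K \<and> snd w = \<beta> * snd a \<and> le_s w a"

definition winning_on :: "real set \<Rightarrow> real \<Rightarrow> real set \<Rightarrow> bool" where
  "winning_on K \<alpha> S \<longleftrightarrow>
    (\<forall>\<beta>. 0 < \<beta> \<and> \<beta> < 1 \<longrightarrow>
      (\<exists>f :: (real \<times> real) list \<Rightarrow> real \<times> real.
        \<forall>b :: nat \<Rightarrow> real \<times> real.
          fst (b 0) \<in> K \<and> snd (b 0) > 0 \<longrightarrow>
            (\<forall>k. (\<forall>j<k. bob_move_ok K \<beta> (b (Suc j)) (f (map b [0..<Suc j])))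
                   \<longrightarrow> alice_move_ok K \<alpha> (f (map b [0..<Suc k])) (b k)) \<and>
            ((\<forall>k. bob_move_ok K \<beta> (b (Suc k)) (f (map b [0..<Suc k])))
                \<longrightarrow> (\<Inter>k. cball (fst (b k)) (snd (b k))) \<inter> K \<subseteq> S)))"

end

theory Submission
  imports Defs
begin

lemma le_s_trans: "le_s a b \<Longrightarrow> le_s b c \<Longrightarrow> le_s a c"
  unfolding le_s_def using dist_triangle[of "fst c" "fst a" "fst b"] by linarith

lemma le_s_cball: "le_s a b \<Longrightarrow> p \<in> cball (fst a) (snd a) \<Longrightarrow> p \<in> cball (fst b) (snd b)"
  unfolding le_s_def mem_cball using dist_triangle[of "fst b" p "fst a"] by linarith

lemma avoid_point:
  assumes sets: "sets \<mu> = sets borel"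
  and dec: "emeasure \<mu> (cball x \<rho>' \<inter> cball z r) < ennreal c * emeasure \<mu> (cball x \<rho>')"
  and c: "c \<le> 1"
  shows "\<exists>p\<in>msupp \<mu>. dist p x \<le> \<rho>' \<and> r \<le> dist p z"
proof (rule ccontr)
  assume nex: "\<not> (\<exists>p\<in>msupp \<mu>. dist p x \<le> \<rho>' \<and> r \<le> dist p z)"
  define T where "T = cball x \<rho>' - ball z r"
  have cT: "compact T" unfolding T_def by (simp add: compact_diff)
  define TT where "TT = {ball t s | t s. s>0 \<and> emeasure \<mu> (ball t s) = 0}"
  have cov: "T \<subseteq> \<Union>TT"
  proof
    fix t assume t: "t\<in>T"
    then have "t \<notin> msupp \<mu>" using nex unfolding T_def by (auto simp: dist_commute)
    then obtain s where "s>0" "\<not> emeasure \<mu> (ball t s) > 0" unfolding msupp_def by auto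
    then have "emeasure \<mu> (ball t s) = 0" by (simp add: not_gr_zero)
    then have "ball t s \<in> TT" unfolding TT_def using \<open>s>0\<close> by blast
    then show "t \<in> \<Union>TT" using \<open>s>0\<close> by (metis UnionI centre_in_ball)
  qed
  obtain TT' where TT': "TT' \<subseteq> TT" "finite TT'" "T \<subseteq> \<Union>TT'"
    using compactE[OF cT cov] TT_def by auto
  have "(\<Union>B\<in>TT'. B) \<in> null_sets \<mu>"
  proof (rule null_sets_UN')
    show "countable TT'" using TT'(2) by (simp add: countable_finite)
    fix B assume "B \<in> TT'"
    then obtain t s where "B = ball t s" "emeasure \<mu> (ball t s) = 0" using TT'(1) TT_def by auto
    then show "B \<in> null_sets \<mu>" using sets by auto
  qed
  moreover have "T \<in> sets \<mu>" using sets cT by (simp add: borel_closed compact_imp_closed)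
  ultimately have Tn: "T \<in> null_sets \<mu>" using null_sets_subset TT'(3) by auto
  have sub: "cball x \<rho>' \<subseteq> T \<union> (cball x \<rho>' \<inter> cball z r)" unfolding T_def by auto
  have "emeasure \<mu> (cball x \<rho>') \<le> emeasure \<mu> (T \<union> (cball x \<rho>' \<inter> cball z r))"
    by (rule emeasure_mono[OF sub]) (use sets \<open>T \<in> sets \<mu>\<close> in auto)
  also have "\<dots> \<le> emeasure \<mu> T + emeasure \<mu> (cball x \<rho>' \<inter> cball z r)"
    by (rule emeasure_subadditive) (use sets \<open>T \<in> sets \<mu>\<close> in auto)
  also have "\<dots> = emeasure \<mu> (cball x \<rho>' \<inter> cball z r)" using Tn by auto
  also have "\<dots> < ennreal c * emeasure \<mu> (cball x \<rho>')" by (rule dec)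
  also have "\<dots> \<le> 1 * emeasure \<mu> (cball x \<rho>')"
    by (rule mult_right_mono) (use c in \<open>auto simp: ennreal_le_1\<close>)
  finally show False by simp
qed

lemma sim_legal:
  assumes "bob_move_ok K \<beta> w1 a1" "alice_move_ok K \<alpha> a2 w1" "bob_move_ok K \<beta> w2 a2"
  shows "bob_move_ok K (\<beta>*\<alpha>*\<beta>) w2 a1"
proof -
  have "le_s w2 a1" using assms le_s_trans unfolding bob_move_ok_def alice_move_ok_def by meson
  then show ?thesis using assms unfolding bob_move_ok_def alice_move_ok_def by (auto simp: algebra_simps)
qed

theorem corollary3p3:
  fixes \<mu> :: "real measure" and C \<gamma> \<alpha> :: real and S S' :: "real set"
  assumes "abs_decaying \<mu> C \<gamma>"
    and "0 < \<alpha>" and "\<alpha> \<le> (1/4) * (1 / (3 * C)) powr (1 / \<gamma>)"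
    and "winning_on (msupp \<mu>) \<alpha> S"
    and "S' \<subseteq> S" and "countable S'"
  shows "winning_on (msupp \<mu>) \<alpha> (S - S')"
proof -
  define K where "K = msupp \<mu>"
  show ?thesis
  proof (cases "K = {}")
    case True then show ?thesis unfolding winning_on_def K_def[symmetric] by auto
  next
    case False
    then obtain x0 where x0: "x0 \<in> K" by auto
    from assms(1) obtain \<rho>0 where \<rho>0: "\<rho>0>0" and sets: "sets \<mu> = sets borel"
      and Cpos: "C > 0" and gpos: "\<gamma> > 0"
      and dec: "\<And>\<rho> x y \<epsilon>. 0 < \<rho> \<Longrightarrow> \<rho> \<le> \<rho>0 \<Longrightarrow> x \<in> K \<Longrightarrow> \<epsilon> > 0 \<Longrightarrow>
        emeasure \<mu> (cball x \<rho> \<inter> cball y (\<epsilon> * \<rho>))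
          < ennreal (C * \<epsilon> powr \<gamma>) * emeasure \<mu> (cball x \<rho>)"
      unfolding abs_decaying_def locally_finite_borel_def K_def by blast
    have C1: "C > 1"
    proof (rule ccontr)
      assume "\<not> C > 1"
      have "emeasure \<mu> (cball x0 \<rho>0 \<inter> cball x0 (1 * \<rho>0))
          < ennreal (C * 1 powr \<gamma>) * emeasure \<mu> (cball x0 \<rho>0)"
        using dec[OF \<rho>0 order.refl x0, of 1 x0] by simp
      also have "\<dots> \<le> 1 * emeasure \<mu> (cball x0 \<rho>0)"
        by (rule mult_right_mono) (use \<open>\<not> C > 1\<close> in \<open>auto simp: ennreal_le_1\<close>)
      finally show False by simp
    qed
    define t where "t = (1 / (3 * C)) powr (1 / \<gamma>)"
    have t1: "t \<le> 1" unfolding t_def using C1 gpos powr_mono2[of "1/\<gamma>" "1/(3*C)" 1] by simp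
    have tpos: "t > 0" unfolding t_def using C1 by simp
    have tg: "t powr \<gamma> = 1 / (3*C)" unfolding t_def using C1 gpos by (simp add: powr_powr)
    have a14: "\<alpha> \<le> 1/4" using assms(3) t1 unfolding t_def[symmetric] by simp
    have avoid_ex: "\<exists>c\<in>K. dist c x \<le> (1-\<alpha>)*\<rho> \<and> \<alpha>*\<rho> < dist c z"
      if "x \<in> K" "0 < \<rho>" "(1-\<alpha>)*\<rho> \<le> \<rho>0" for x \<rho> z
    proof -
      define \<epsilon> where "\<epsilon> = 2*\<alpha> / (1-\<alpha>)"
      have epos: "\<epsilon> > 0" unfolding \<epsilon>_def using assms(2) a14 by simp
      have "\<epsilon> \<le> 8/3 * \<alpha>" unfolding \<epsilon>_def using assms(2) a14 by (simp add: field_simps)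
      also have "\<dots> \<le> t" using assms(3) t1 tpos unfolding t_def[symmetric] by simp
      finally have et: "\<epsilon> \<le> t" .
      have "\<epsilon> powr \<gamma> \<le> t powr \<gamma>" using et epos gpos by (intro powr_mono2) auto
      then have ce: "C * \<epsilon> powr \<gamma> \<le> 1" using tg Cpos C1 by (simp add: field_simps)
      have rp: "0 < (1-\<alpha>)*\<rho>" using a14 that(2) by simp
      have eq: "\<epsilon> * ((1-\<alpha>)*\<rho>) = 2*\<alpha>*\<rho>" unfolding \<epsilon>_def using a14 by (simp add: field_simps)
      from avoid_point[OF sets dec[OF rp that(3) that(1) epos, of z, unfolded eq] ce]
      obtain p where "p \<in> K" "dist p x \<le> (1-\<alpha>)*\<rho>" "2*\<alpha>*\<rho> \<le> dist p z"
        unfolding K_def by blast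
      moreover have "\<alpha>*\<rho> < 2*\<alpha>*\<rho>" using assms(2) that(2) by simp
      ultimately show ?thesis by force
    qed
    show ?thesis
      unfolding winning_on_def K_def[symmetric]
    proof (intro allI impI)
      fix \<beta> :: real assume \<beta>: "0 < \<beta> \<and> \<beta> < 1"
      have \<beta>': "0 < \<beta>*\<alpha>*\<beta> \<and> \<beta>*\<alpha>*\<beta> < 1"
      proof -
        have "\<beta>*\<alpha>*\<beta> \<le> 1*\<alpha>*1" using \<beta> assms(2) by (intro mult_mono) auto
        moreover have "0 < \<beta>*\<alpha>*\<beta>" using \<beta> assms(2) by simp
        ultimately show ?thesis using a14 by linarith
      qed
      obtain f where f: "\<And>b. fst (b 0) \<in> K \<and> snd (b 0) > 0 \<Longrightarrow>
            (\<forall>k. (\<forall>j<k. bob_move_ok K (\<beta>*\<alpha>*\<beta>) (b (Suc j)) (f (map b [0..<Suc j])))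
                   \<longrightarrow> alice_move_ok K \<alpha> (f (map b [0..<Suc k])) (b k)) \<and>
            ((\<forall>k. bob_move_ok K (\<beta>*\<alpha>*\<beta>) (b (Suc k)) (f (map b [0..<Suc k])))
                \<longrightarrow> (\<Inter>k. cball (fst (b k)) (snd (b k))) \<inter> K \<subseteq> S)"
        using assms(4) \<beta>' unfolding winning_on_def K_def[symmetric] by blast
      define P where "P = (\<lambda>(w::real\<times>real) z c. c\<in>K \<and> dist c (fst w) \<le> (1-\<alpha>)* snd w \<and> \<alpha>* snd w < dist c z)"
      define av where "av = (\<lambda>(w::real\<times>real) z. if \<exists>c. P w z c then (SOME c. P w z c, \<alpha>* snd w) else (fst w, \<alpha>* snd w))"
      define zs where "zs = (\<lambda>k::nat. from_nat_into S' (fst (prod_decode (k div 2))))"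
      define g where "g = (\<lambda>ws::(real\<times>real) list. if odd (length ws) then f (map (\<lambda>i. ws!(2*i)) [0..<(length ws + 1) div 2]) else av (last ws) (zs (length ws - 1)))"
      have av_ok: "alice_move_ok K \<alpha> (av w z) w" if "fst w \<in> K" "snd w > 0" for w z
      proof (cases "\<exists>c. P w z c")
        case True
        then have "P w z (SOME c. P w z c)" by (rule someI_ex)
        then show ?thesis using True unfolding av_def alice_move_ok_def le_s_def P_def
          by (auto simp: dist_commute algebra_simps)
      next
        case False
        then show ?thesis using that a14 unfolding av_def alice_move_ok_def le_s_def by auto
      qed
      have gE: "g (map b [0..<Suc (2*m)]) = f (map (\<lambda>j. b (2*j)) [0..<Suc m])" for b m
      proof -
        have "map (\<lambda>i. (map b [0..<Suc (2*m)])!(2*i)) [0..<Suc m] = map (\<lambda>j. b (2*j)) [0..<Suc m]"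
          by (rule map_cong) (auto simp del: upt_Suc)
        moreover have "odd (length (map b [0..<Suc (2*m)]))" by simp
        moreover have "(length (map b [0..<Suc (2*m)]) + 1) div 2 = Suc m" by simp
        ultimately show ?thesis unfolding g_def by (simp only: if_True not_False_eq_True)
      qed
      have gO: "g (map b [0..<Suc (Suc (2*m))]) = av (b (Suc (2*m))) (zs (Suc (2*m)))" for b m
        unfolding g_def by (simp del: upt_Suc add: last_map)
      show "\<exists>f. \<forall>b. fst (b 0) \<in> K \<and> snd (b 0) > 0 \<longrightarrow>
            (\<forall>k. (\<forall>j<k. bob_move_ok K \<beta> (b (Suc j)) (f (map b [0..<Suc j])))
                   \<longrightarrow> alice_move_ok K \<alpha> (f (map b [0..<Suc k])) (b k)) \<and>
            ((\<forall>k. bob_move_ok K \<beta> (b (Suc k)) (f (map b [0..<Suc k])))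
                \<longrightarrow> (\<Inter>k. cball (fst (b k)) (snd (b k))) \<inter> K \<subseteq> S - S')"
      proof (rule exI[of _ g], rule allI, rule impI, rule conjI)
        fix b :: "nat \<Rightarrow> real \<times> real"
        assume b0: "fst (b 0) \<in> K \<and> snd (b 0) > 0"
        define b' where "b' = (\<lambda>j. b (2*j))"
        have fb: "(\<forall>k. (\<forall>j<k. bob_move_ok K (\<beta>*\<alpha>*\<beta>) (b' (Suc j)) (f (map b' [0..<Suc j])))
                   \<longrightarrow> alice_move_ok K \<alpha> (f (map b' [0..<Suc k])) (b' k)) \<and>
            ((\<forall>k. bob_move_ok K (\<beta>*\<alpha>*\<beta>) (b' (Suc k)) (f (map b' [0..<Suc k])))
                \<longrightarrow> (\<Inter>k. cball (fst (b' k)) (snd (b' k))) \<inter> K \<subseteq> S)"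
          using f[of b'] b0 unfolding b'_def by simp
        define L where "L = (\<lambda>j. bob_move_ok K \<beta> (b (Suc j)) (g (map b [0..<Suc j])))"
        have simL: "bob_move_ok K (\<beta>*\<alpha>*\<beta>) (b' (Suc i)) (f (map b' [0..<Suc i]))"
          if "L (2*i)" "L (Suc (2*i))" "alice_move_ok K \<alpha> (g (map b [0..<Suc (Suc (2*i))])) (b (Suc (2*i)))" for i
        proof -
          have "bob_move_ok K \<beta> (b (Suc (2*i))) (f (map b' [0..<Suc i]))"
            using that(1) unfolding L_def gE b'_def by simp
          moreover have "bob_move_ok K \<beta> (b (Suc (Suc (2*i)))) (g (map b [0..<Suc (Suc (2*i))]))"
            using that(2) unfolding L_def by simp
          ultimately show ?thesis using sim_legal that(3) unfolding b'_def by (simp add: mult_2)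
        qed
        have Q: "(\<forall>j<k. L j) \<longrightarrow> (\<forall>i\<le>k. fst (b i) \<in> K \<and> snd (b i) > 0 \<and>
                   alice_move_ok K \<alpha> (g (map b [0..<Suc i])) (b i))" for k
        proof (induction k)
          case 0
          have "alice_move_ok K \<alpha> (f (map b' [0..<Suc 0])) (b' 0)" using fb by blast
          then have "alice_move_ok K \<alpha> (g (map b [0..<Suc 0])) (b 0)"
            using gE[of b 0] unfolding b'_def by simp
          then show ?case using b0 by auto
        next
          case (Suc k)
          show ?case
          proof (intro impI)
            assume Lk: "\<forall>j<Suc k. L j"
            then have IH: "\<forall>i\<le>k. fst (b i) \<in> K \<and> snd (b i) > 0 \<and>
                   alice_move_ok K \<alpha> (g (map b [0..<Suc i])) (b i)" using Suc by auto
            have bk: "bob_move_ok K \<beta> (b (Suc k)) (g (map b [0..<Suc k]))" using Lk unfolding L_def by auto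
            have ak: "alice_move_ok K \<alpha> (g (map b [0..<Suc k])) (b k)" using IH by auto
            have new1: "fst (b (Suc k)) \<in> K \<and> snd (b (Suc k)) > 0"
              using bk ak IH \<beta> assms(2) unfolding bob_move_ok_def alice_move_ok_def by auto
            have new2: "alice_move_ok K \<alpha> (g (map b [0..<Suc (Suc k)])) (b (Suc k))"
            proof (cases "even k")
              case True
              then obtain m where m: "k = 2*m" by (auto elim: evenE)
              show ?thesis unfolding m gO using av_ok new1 unfolding m by simp
            next
              case False
              then obtain m where m: "Suc k = 2*m" by (metis even_Suc evenE)
              have "\<forall>j<m. bob_move_ok K (\<beta>*\<alpha>*\<beta>) (b' (Suc j)) (f (map b' [0..<Suc j]))"
              proof (intro allI impI)
                fix j assume "j < m"
                then have "2*j < Suc k" "Suc (2*j) < Suc k" "Suc (2*j) \<le> k" using m by auto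
                then show "bob_move_ok K (\<beta>*\<alpha>*\<beta>) (b' (Suc j)) (f (map b' [0..<Suc j]))"
                  using simL[of j] Lk IH by auto
              qed
              then have "alice_move_ok K \<alpha> (f (map b' [0..<Suc m])) (b' m)" using fb by blast
              then show ?thesis using gE[of b m] unfolding b'_def m by simp
            qed
            show "\<forall>i\<le>Suc k. fst (b i) \<in> K \<and> snd (b i) > 0 \<and>
                   alice_move_ok K \<alpha> (g (map b [0..<Suc i])) (b i)"
              using IH new1 new2 by (auto simp: le_Suc_eq)
          qed
        qed
        show "\<forall>k. (\<forall>j<k. bob_move_ok K \<beta> (b (Suc j)) (g (map b [0..<Suc j])))
                   \<longrightarrow> alice_move_ok K \<alpha> (g (map b [0..<Suc k])) (b k)"
          using Q unfolding L_def by blast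
        show "(\<forall>k. bob_move_ok K \<beta> (b (Suc k)) (g (map b [0..<Suc k]))) \<longrightarrow>
           (\<Inter>k. cball (fst (b k)) (snd (b k))) \<inter> K \<subseteq> S - S'"
        proof (intro impI subsetI)
          assume allL: "\<forall>k. bob_move_ok K \<beta> (b (Suc k)) (g (map b [0..<Suc k]))"
          fix p assume p: "p \<in> (\<Inter>k. cball (fst (b k)) (snd (b k))) \<inter> K"
          have Qa: "fst (b i) \<in> K \<and> snd (b i) > 0 \<and> alice_move_ok K \<alpha> (g (map b [0..<Suc i])) (b i)" for i
            using Q[of i] allL unfolding L_def by auto
          have "\<forall>k. bob_move_ok K (\<beta>*\<alpha>*\<beta>) (b' (Suc k)) (f (map b' [0..<Suc k]))"
            using simL Qa allL unfolding L_def by blast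
          then have "(\<Inter>k. cball (fst (b' k)) (snd (b' k))) \<inter> K \<subseteq> S" using fb by blast
          moreover have "p \<in> (\<Inter>k. cball (fst (b' k)) (snd (b' k))) \<inter> K" using p unfolding b'_def by auto
          ultimately have pS: "p \<in> S" by blast
          have rad: "snd (b k) = (\<beta>*\<alpha>)^k * snd (b 0)" for k
          proof (induction k)
            case (Suc k)
            have "snd (b (Suc k)) = \<beta> * (\<alpha> * snd (b k))"
              using allL Qa[of k] unfolding bob_move_ok_def alice_move_ok_def by auto
            then show ?case using Suc by simp
          qed simp
          have "p \<notin> S'"
          proof
            assume pS': "p \<in> S'"
            define n where "n = to_nat_on S' p"
            have ba: "0 < \<beta>*\<alpha>" "\<beta>*\<alpha> < 1" using \<beta> assms(2) a14 mult_strict_mono[of \<beta> 1 \<alpha> 1] by auto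
            have y: "0 < \<rho>0 / ((1-\<alpha>) * snd (b 0))" using \<rho>0 b0 a14 by simp
            obtain N where N: "(\<beta>*\<alpha>)^N < \<rho>0 / ((1-\<alpha>) * snd (b 0))"
              using real_arch_pow_inv[OF y ba(2)] by blast
            define m where "m = prod_encode (n, N)"
            define k where "k = Suc (2*m)"
            have "N \<le> m" unfolding m_def by (rule le_prod_encode_2)
            then have Nk: "N \<le> k" unfolding k_def by simp
            have zk: "zs k = p" unfolding zs_def k_def m_def n_def using assms(6) pS' by simp
            have "(\<beta>*\<alpha>)^k \<le> (\<beta>*\<alpha>)^N" using ba Nk by (intro power_decreasing) auto
            define D where "D = (1-\<alpha>) * snd (b 0)"
            have Dp: "D > 0" unfolding D_def using b0 a14 by simp
            have q1: "(\<beta>*\<alpha>)^k * D \<le> (\<beta>*\<alpha>)^N * D"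
              using \<open>(\<beta>*\<alpha>)^k \<le> (\<beta>*\<alpha>)^N\<close> Dp by (intro mult_right_mono) auto
            have q2: "(\<beta>*\<alpha>)^N * D < \<rho>0" using N Dp unfolding D_def[symmetric] by (simp add: less_divide_eq)
            have "(1-\<alpha>) * snd (b k) = (\<beta>*\<alpha>)^k * D" unfolding D_def rad[of k] by simp
            then have "(1-\<alpha>) * snd (b k) \<le> \<rho>0" using q1 q2 by linarith
            then obtain c where c: "P (b k) p c" using avoid_ex[of "fst (b k)" "snd (b k)" p] Qa[of k]
              unfolding P_def by auto
            then have cs: "P (b k) p (SOME c. P (b k) p c)" by (rule someI)
            have gk: "g (map b [0..<Suc k]) = (SOME c. P (b k) p c, \<alpha> * snd (b k))"
              unfolding k_def gO using zk c unfolding av_def k_def by auto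
            have "p \<in> cball (fst (b (Suc k))) (snd (b (Suc k)))" using p by auto
            then have "p \<in> cball (fst (g (map b [0..<Suc k]))) (snd (g (map b [0..<Suc k])))"
              using le_s_cball allL unfolding bob_move_ok_def by blast
            then show False using cs unfolding gk P_def by (auto simp: dist_commute)
          qed
          with pS show "p \<in> S - S'" by blast
        qed
      qed
    qed
  qed
qed

end
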